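(* Let $\gamma\in(0,1)$ and $c\ge 0$. Define the deterministic sequence $\bar v^0=0$ and, for $n\ge 1$, $$\hat v^n = c+\gamma \bar v^{n-1},\qquad \bar v^n=\Big(1-\tfrac1n\Big)\bar v^{n-1}+\tfrac1n \hat v^n .$$ Let $b=\frac{\gamma^2+\gamma-1}{\gamma}$. Then for all $n=1,2,\dots$, $$\bar v^n\ \le\ \frac{c}{1-\gamma}\Big[1-b\,n^{-(1-\gamma)}-\frac{1-\gamma}{\gamma}\cdot\frac1n\Big].$$
   Context: This is approximate value iteration for a single-state, single-action problem with deterministic one-period reward $c$, discount factor $\gamma$, initial approximation $0$, and stepsize $\alpha_{n-1}=1/n$. *)

theory Defs
  imports "HOL-Analysis.Analysis"
begin

fun vbar :: "real \<Rightarrow> real \<Rightarrow> nat \<Rightarrow> real" where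
  "vbar c g 0 = 0"
| "vbar c g (Suc m) =
     (let n = real (Suc m); vprev = vbar c g m; vhat = c + g * vprev
      in (1 - 1 / n) * vprev + (1 / n) * vhat)"

definition vhat :: "real \<Rightarrow> real \<Rightarrow> nat \<Rightarrow> real" where
  "vhat c g n = c + g * vbar c g (n - 1)"

end

theory Submission
  imports Defs
begin

lemma bern: fixes z a :: real assumes "0 < z" "0 \<le> a" "a \<le> 1"
  shows "z powr a \<le> 1 + a * (z - 1)"
  using Youngs_inequality_0[of a "1-a" z 1] assms by (simp add: algebra_simps)

lemma vbar_Suc: "vbar c g (Suc m) = vbar c g m * (1 - (1 - g) / real (Suc m)) + c / real (Suc m)"
  by (simp add: Let_def field_simps)

lemma r1l: assumes "0 < g" "1 \<le> (x::real)" "a = 1 - g"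
  shows "a/(g*x)*(1 - a/(x+1)) - a/(g*(x+1)) = a/((x+1)*x)"
proof -
  define y where "y = x + 1"
  have y0: "y \<noteq> 0" "x \<noteq> 0" "g \<noteq> 0" using assms unfolding y_def by auto
  have "1 - a/y = (y-a)/y" using y0 by (simp add: diff_divide_distrib)
  hence "a/(g*x)*(1 - a/y) = a*(y-a)/(g*x*y)" by simp
  moreover have "a/(g*y) = a*x/(g*x*y)" using y0 by simp
  ultimately have "a/(g*x)*(1 - a/y) - a/(g*y) = (a*(y-a) - a*x)/(g*x*y)"
    by (simp add: diff_divide_distrib)
  also have "a*(y-a) - a*x = a*g" unfolding y_def assms(3) by algebra
  also have "a*g/(g*x*y) = a/(y*x)" using y0 by simp
  finally show ?thesis unfolding y_def .
qed
lemma keyineq: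
  fixes x a g b :: real
  assumes x: "1 \<le> x" and a: "0 < a" "a < 1" and g: "g = 1 - a" and b: "b = g - a / g"
  shows "b * (x+1) powr (-a) + a/(g*(x+1)) \<le> (b * x powr (-a) + a/(g*x)) * (1 - a/(x+1))"
proof -
  define p where "p = x powr (-a)"
  define r where "r = (x/(x+1)) powr a"
  have gp: "0 < g" using g a by simp
  have p0: "0 < p" using x by (simp add: p_def)
  have p1: "p \<le> 1" unfolding p_def using x a ge_one_powr_ge_zero[of x a] by (simp add: powr_minus_divide)
  have ap1: "a * p \<le> 1" using p1 p0 a by (simp add: mult_le_one)
  have q: "(x+1) powr (-a) = p * r"
  proof -
    have "(x+1) powr (-a) = x powr (-a) * (x/(x+1)) powr a"
      using x by (simp add: powr_minus_divide powr_divide field_simps)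
    thus ?thesis by (simp add: p_def r_def)
  qed
  have F1: "r \<le> 1 - a/(x+1)"
  proof -
    have "r \<le> 1 + a * (x/(x+1) - 1)" unfolding r_def using x a by (intro bern) auto
    also have "x/(x+1) - 1 = -1/(x+1)" using x by (simp add: field_simps)
    finally show ?thesis by simp
  qed
  have F2: "x/(x+a) \<le> r"
  proof -
    have h: "((x+1)/x) powr a \<le> 1 + a * ((x+1)/x - 1)" using x a by (intro bern) auto
    have "(x+1)/x - 1 = 1/x" using x by (simp add: field_simps)
    with h have h2: "((x+1)/x) powr a \<le> (x+a)/x" using x by (simp add: field_simps)
    have rr: "r = 1 / ((x+1)/x) powr a" unfolding r_def using x
      by (simp add: powr_divide)
    have pos: "0 < ((x+1)/x) powr a" using x by simp
    have "x/(x+a) = 1/((x+a)/x)" by simp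
    also have "\<dots> \<le> 1 / ((x+1)/x) powr a"
      by (rule divide_left_mono[OF h2]) (use pos x a in \<open>auto intro!: mult_pos_pos\<close>)
    finally show ?thesis using rr by simp
  qed
  define D where "D = p * (1 - a/(x+1) - r)"
  have D0: "0 \<le> D" using F1 p0 unfolding D_def by simp
  have Dle: "D \<le> p * (a*g/((x+1)*(x+a)))"
  proof -
    have "1 - a/(x+1) - r \<le> 1 - a/(x+1) - x/(x+a)" using F2 by simp
    also have "\<dots> = a*g/((x+1)*(x+a))" using x a g by (simp add: field_simps) algebra
    finally have "p * (1 - a/(x+1) - r) \<le> p * (a*g/((x+1)*(x+a)))"
      by (rule mult_left_mono) (use p0 in auto)
    thus ?thesis unfolding D_def .
  qed
  have bge: "-(a/g) \<le> b" using b gp by simp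
  have bD: "-(a/g) * D \<le> b * D" using mult_right_mono[OF bge D0] .
  have "(a/g) * D \<le> (a/g) * (p * (a*g/((x+1)*(x+a))))"
    by (rule mult_left_mono[OF Dle]) (use a gp in simp)
  also have "\<dots> = (a*p) * a / ((x+1)*(x+a))" using gp by (simp add: field_simps)
  also have "\<dots> \<le> 1 * a / ((x+1)*(x+a))"
    by (rule divide_right_mono[OF mult_right_mono[OF ap1]]) (use a x in auto)
  also have "\<dots> = a / ((x+1)*(x+a))" by simp
  also have "\<dots> \<le> a / ((x+1)*x)"
  proof (rule divide_left_mono)
    show "(x+1)*x \<le> (x+1)*(x+a)" by (rule mult_left_mono) (use a x in auto)
    show "0 \<le> a" using a by simp
    show "0 < (x+1)*(x+a)*((x+1)*x)" using a x by (simp add: mult_pos_pos)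
  qed
  finally have main: "(a/g) * D \<le> a / ((x+1)*x)" .
  have eq: "(b * p + a/(g*x)) * (1 - a/(x+1)) - (b * (p*r) + a/(g*(x+1))) = b * D + a/((x+1)*x)"
  proof -
    have r1: "a/(g*x)*(1 - a/(x+1)) - a/(g*(x+1)) = a/((x+1)*x)"
      by (rule r1l) (use gp x g in auto)
    have "(b * p + a/(g*x)) * (1 - a/(x+1)) - (b * (p*r) + a/(g*(x+1)))
        = b*D + (a/(g*x)*(1 - a/(x+1)) - a/(g*(x+1)))"
      unfolding D_def by (simp only: ring_distribs)
    thus ?thesis using r1 by simp
  qed
  have nn: "0 \<le> b*D + a/((x+1)*x)" using main bD by linarith
  show ?thesis unfolding q p_def[symmetric] using eq nn by linarith
qed

lemma fin: fixes K B P A g y :: real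
  shows "K - K*(B*P + A/(g*y)) = K*(1 - B*P - A/g*(1/y))"
proof -
  have "A/(g*y) = A/g*(1/y)" by simp
  thus ?thesis by (simp add: right_diff_distrib distrib_left)
qed
lemma alg: fixes g F c :: real assumes "g < 1"
  shows "c/(1-g) * (1 - F) * (1 - (1-g) / real (Suc m)) + c / real (Suc m)
       = c/(1-g) - c/(1-g) * (F * (1 - (1-g)/(real m + 1)))"
proof -
  define K where "K = c/(1-g)"
  define t where "t = (1-g)/(real m + 1)"
  have cK: "c / real (Suc m) = K * t" unfolding K_def t_def using assms by simp
  have "K*(1-F)*(1-t) + K*t = K - K*(F*(1-t))" by algebra
  thus ?thesis using cK unfolding K_def t_def by (simp add: add.commute)
qed

theorem theorem2:
  fixes c \<gamma> :: real and n :: nat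
  assumes "0 < \<gamma>" and "\<gamma> < 1" and "0 \<le> c" and "1 \<le> n"
  shows "vbar c \<gamma> n \<le> c / (1 - \<gamma>) *
           (1 - ((\<gamma>^2 + \<gamma> - 1) / \<gamma>) * real n powr (-(1 - \<gamma>))
              - ((1 - \<gamma>) / \<gamma>) * (1 / real n))"
  using assms(4)
proof (induction n rule: dec_induct)
  case base
  have "vbar c \<gamma> 1 = c" by (simp add: Let_def)
  moreover have "c / (1 - \<gamma>) * (1 - ((\<gamma>^2 + \<gamma> - 1) / \<gamma>) - ((1 - \<gamma>) / \<gamma>)) = c"
    using assms by (simp add: field_simps power2_eq_square)
  ultimately show ?case by simp
next
  case (step m)
  let ?a = "1 - \<gamma>"
  let ?b = "(\<gamma>^2 + \<gamma> - 1) / \<gamma>"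
  let ?K = "c / (1 - \<gamma>)"
  let ?f = "\<lambda>x::real. ?b * x powr (-?a) + ?a/(\<gamma>*x)"
  have K0: "0 \<le> ?K" using assms by simp
  have fm: "?f (real m + 1) \<le> ?f (real m) * (1 - ?a/(real m + 1))"
    by (rule keyineq[where g=\<gamma>]) (use assms step in \<open>auto simp: field_simps power2_eq_square\<close>)
  have IH: "vbar c \<gamma> m \<le> ?K * (1 - ?f (real m))"
    using step.IH by (simp add: algebra_simps)
  have nn: "0 \<le> 1 - ?a / real (Suc m)" using assms by (simp add: field_simps)
  have "vbar c \<gamma> (Suc m) = vbar c \<gamma> m * (1 - ?a / real (Suc m)) + c / real (Suc m)"
    by (rule vbar_Suc)
  also have "\<dots> \<le> ?K * (1 - ?f (real m)) * (1 - ?a / real (Suc m)) + c / real (Suc m)"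
    using mult_right_mono[OF IH nn] by simp
  also have "\<dots> = ?K - ?K * (?f (real m) * (1 - ?a/(real m + 1)))"
    using alg[of \<gamma> c "?f (real m)" m] assms by simp
  also have "\<dots> \<le> ?K - ?K * ?f (real m + 1)"
  proof -
    have h: "?K * ?f (real m + 1) \<le> ?K * (?f (real m) * (1 - ?a/(real m + 1)))"
      by (rule mult_left_mono[OF fm K0])
    show ?thesis using h by linarith
  qed
  also have "\<dots> = ?K * (1 - ?b * real (Suc m) powr (-(1-\<gamma>)) - ((1-\<gamma>)/\<gamma>) * (1/real (Suc m)))"
    unfolding of_nat_Suc add.commute[of 1 "real m"] by (rule fin)
  finally show ?case .
qed

end
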